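(* Let $d_{21}$ be the 3-dimensional complex associative algebra with basis $\{e_1,e_2,e_3\}$ and nonzero products $e_1e_1=e_3$, $e_1e_2=e_3$, $e_2e_1=-e_3$. For every Hermitian inner product $\langle\cdot,\cdot\rangle$ on $d_{21}$ there exist $k>0$, $a>0$ and an automorphism $\phi$ of $d_{21}$ such that $\{a\phi e_1,\phi e_2,\phi e_3\}$ is an orthonormal basis with respect to $k\langle\cdot,\cdot\rangle$.
   Context: An automorphism of an algebra is an invertible linear map $\phi$ with $\phi(xy)=\phi(x)\phi(y)$. All products of basis vectors of $d_{21}$ not listed are zero. *)

theory Defs
  imports "HOL-Analysis.Analysis"
begin

text \<open>The algebra d21 is modelled on complex^3: x = x$1 e1 + x$2 e2 + x$3 e3,
  where e_i = axis i 1.  Products: e1 e1 = e3, e1 e2 = e3, e2 e1 = -e3, all others zero.\<close>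

definition d21_basis :: "3 \<Rightarrow> complex ^ 3" where
  "d21_basis i = axis i 1"

definition d21_mult :: "complex ^ 3 \<Rightarrow> complex ^ 3 \<Rightarrow> complex ^ 3" where
  "d21_mult x y = (\<chi> i. if i = 3 then x$1 * y$1 + x$1 * y$2 - x$2 * y$1 else 0)"

definition hermitian_inner :: "(complex ^ 3 \<Rightarrow> complex ^ 3 \<Rightarrow> complex) \<Rightarrow> bool" where
  "hermitian_inner h \<longleftrightarrow>
     (\<forall>x y z. h (x + y) z = h x z + h y z) \<and>
     (\<forall>c x y. h (c *s x) y = c * h x y) \<and>
     (\<forall>x y. h y x = cnj (h x y)) \<and>
     (\<forall>x. x \<noteq> 0 \<longrightarrow> Im (h x x) = 0 \<and> Re (h x x) > 0)"

definition d21_automorphism :: "(complex ^ 3 \<Rightarrow> complex ^ 3) \<Rightarrow> bool" where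
  "d21_automorphism \<phi> \<longleftrightarrow>
     (\<forall>x y. \<phi> (x + y) = \<phi> x + \<phi> y) \<and>
     (\<forall>c x. \<phi> (c *s x) = c *s \<phi> x) \<and>
     bij \<phi> \<and>
     (\<forall>x y. \<phi> (d21_mult x y) = d21_mult (\<phi> x) (\<phi> y))"

definition orthonormal_basis3 ::
  "(complex ^ 3 \<Rightarrow> complex ^ 3 \<Rightarrow> complex) \<Rightarrow> (3 \<Rightarrow> complex ^ 3) \<Rightarrow> bool" where
  "orthonormal_basis3 g v \<longleftrightarrow>
     (\<forall>i j. g (v i) (v j) = (if i = j then 1 else 0)) \<and>
     (\<forall>x. \<exists>c :: 3 \<Rightarrow> complex. x = (\<Sum>i\<in>UNIV. c i *s v i))"

end

theory Submission
  imports Defs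
begin

lemma vec3_eq: "(x::complex^3) = y \<longleftrightarrow> x$1 = y$1 \<and> x$2 = y$2 \<and> x$3 = y$3"
  by (simp add: vec_eq_iff forall_3)

lemma d3: "(1::3) \<noteq> 2" "(1::3) \<noteq> 3" "(2::3) \<noteq> 3" "(2::3) \<noteq> 1" "(3::3) \<noteq> 1" "(3::3) \<noteq> 2"
  by simp_all

lemma aut:
  fixes p b1 al c :: complex
  assumes p: "p \<noteq> 0"
  defines "u1 \<equiv> d21_basis 1 + b1 *s (d21_basis 2 + al *s d21_basis 3) + c *s d21_basis 3"
      and "u2 \<equiv> d21_basis 2 + al *s d21_basis 3"
  shows "d21_automorphism (\<lambda>x. (p*x$1) *s u1 + (p*x$2) *s u2 + (p^2*x$3) *s d21_basis 3)"
proof -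
  have c: "u1$1 = 1" "u1$2 = b1" "u1$3 = b1*al + c" "u2$1 = 0" "u2$2 = 1" "u2$3 = al"
    "d21_basis 3 $ 1 = 0" "d21_basis 3 $ 2 = 0" "d21_basis 3 $ 3 = 1"
    by (simp_all add: u1_def u2_def d21_basis_def axis_def)
  let ?f = "\<lambda>x::complex^3. (p*x$1) *s u1 + (p*x$2) *s u2 + (p^2*x$3) *s d21_basis 3"
  let ?g = "\<lambda>y::complex^3. vector [y$1/p, (y$2 - y$1*b1)/p,
        (y$3 - (y$1/p)*p*(b1*al+c) - ((y$2 - y$1*b1)/p)*p*al)/p^2] :: complex^3"
  have fg: "?f (?g y) = y" for y
    using p by (simp add: vec3_eq c vector_3 field_simps)
  have gf: "?g (?f x) = x" for x
    using p by (simp add: vec3_eq c vector_3 field_simps)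
  have "bij ?f"
    by (rule o_bij[of ?g]; rule ext; simp only: comp_def fg gf id_def)
  then show ?thesis
    unfolding d21_automorphism_def
    by (simp add: vec3_eq c d21_mult_def field_simps power2_eq_square)
qed

lemma herm_facts:
  assumes "hermitian_inner h"
  shows "h (x + y) z = h x z + h y z" "h (c *s x) y = c * h x y" "h y x = cnj (h x y)"
    "h x (y + z) = h x y + h x z" "h x (c *s y) = cnj c * h x y"
    "x \<noteq> 0 \<Longrightarrow> h x x = complex_of_real (Re (h x x)) \<and> Re (h x x) > 0"
proof -
  have A: "\<And>x y z. h (x + y) z = h x z + h y z" and B: "\<And>c x y. h (c *s x) y = c * h x y"
    and C: "\<And>x y. h y x = cnj (h x y)"
    and D: "\<And>x. x \<noteq> 0 \<Longrightarrow> Im (h x x) = 0 \<and> Re (h x x) > 0"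
    using assms unfolding hermitian_inner_def by blast+
  show "h (x + y) z = h x z + h y z" "h (c *s x) y = c * h x y" "h y x = cnj (h x y)"
    using A B C by blast+
  show "h x (y + z) = h x y + h x z"
    by (metis A C complex_cnj_add)
  show "h x (c *s y) = cnj c * h x y"
    by (metis B C complex_cnj_mult)
  show "x \<noteq> 0 \<Longrightarrow> h x x = complex_of_real (Re (h x x)) \<and> Re (h x x) > 0"
    using D by (simp add: complex_eq_iff)
qed

theorem lemma5p1:
  fixes h :: "complex ^ 3 \<Rightarrow> complex ^ 3 \<Rightarrow> complex"
  assumes "hermitian_inner h"
  shows "\<exists>(k::real) (a::real) \<phi>. k > 0 \<and> a > 0 \<and> d21_automorphism \<phi> \<and>
           orthonormal_basis3 (\<lambda>x y. complex_of_real k * h x y)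
             (\<lambda>i. if i = 1 then complex_of_real a *s \<phi> (d21_basis 1) else \<phi> (d21_basis i))"
proof -
  note H = herm_facts[OF assms]
  define E1 where "E1 = d21_basis 1"
  define E2 where "E2 = d21_basis 2"
  define E3 where "E3 = d21_basis 3"
  define al where "al = - (h E2 E3 / h E3 E3)"
  define u2 where "u2 = E2 + al *s E3"
  define c where "c = - (h E1 E3 / h E3 E3)"
  define b1 where "b1 = - (h E1 u2 / h u2 u2)"
  define u1 where "u1 = E1 + b1 *s u2 + c *s E3"
  have cE: "E1$1 = 1" "E1$2 = 0" "E1$3 = 0" "E2$1 = 0" "E2$2 = 1" "E2$3 = 0"
     "E3$1 = 0" "E3$2 = 0" "E3$3 = 1"
    by (simp_all add: E1_def E2_def E3_def d21_basis_def axis_def)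
  have cu: "u1$1 = 1" "u1$2 = b1" "u1$3 = b1*al + c" "u2$1 = 0" "u2$2 = 1" "u2$3 = al"
    by (simp_all add: u1_def u2_def cE)
  have nz: "E3 \<noteq> 0" "u2 \<noteq> 0" "u1 \<noteq> 0"
    using cE cu by (auto simp: vec3_eq)
  define n1 where "n1 = Re (h u1 u1)"
  define n2 where "n2 = Re (h u2 u2)"
  define n3 where "n3 = Re (h E3 E3)"
  have N: "h u1 u1 = of_real n1" "n1 > 0" "h u2 u2 = of_real n2" "n2 > 0"
     "h E3 E3 = of_real n3" "n3 > 0"
    using H(6)[OF nz(1)] H(6)[OF nz(2)] H(6)[OF nz(3)] by (auto simp: n1_def n2_def n3_def)
  have N0: "h u2 u2 \<noteq> 0" "h E3 E3 \<noteq> 0" using N by auto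
  have o23: "h u2 E3 = 0"
    unfolding u2_def H(1) H(2) al_def using N0 by (simp add: field_simps)
  have o32: "h E3 u2 = 0" using o23 H(3) by (metis complex_cnj_zero)
  have o12: "h u1 u2 = 0"
    unfolding u1_def H(1) H(2) b1_def o32 using N0 by (simp add: field_simps)
  have o13: "h u1 E3 = 0"
    unfolding u1_def H(1) H(2) c_def o23 using N0 by (simp add: field_simps)
  have o21: "h u2 u1 = 0" using o12 H(3) by (metis complex_cnj_zero)
  have o31: "h E3 u1 = 0" using o13 H(3) by (metis complex_cnj_zero)
  define pr where "pr = sqrt (n2 / n3)"
  define k where "k = n3 / n2^2"
  define a where "a = sqrt (n2 / n1)"
  have pr: "pr > 0" "pr^2 = n2/n3" using N by (auto simp: pr_def)
  have ap: "a > 0" "a^2 = n2/n1" using N by (auto simp: a_def)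
  have kp: "k > 0" using N by (simp add: k_def)
  define p where "p = complex_of_real pr"
  have p0: "p \<noteq> 0" using pr by (simp add: p_def)
  define \<phi> where "\<phi> = (\<lambda>x::complex^3. (p*x$1) *s u1 + (p*x$2) *s u2 + (p^2*x$3) *s E3)"
  have aut: "d21_automorphism \<phi>"
    using aut[OF p0, of b1 al c] unfolding \<phi>_def u1_def u2_def E1_def E2_def E3_def .
  have ph: "\<phi> (d21_basis 1) = p *s u1" "\<phi> (d21_basis 2) = p *s u2" "\<phi> (d21_basis 3) = p^2 *s E3"
    unfolding E1_def[symmetric] E2_def[symmetric] E3_def[symmetric] \<phi>_def
    by (simp_all add: vec3_eq cE cu)
  define v where "v = (\<lambda>i. if i = 1 then complex_of_real a *s \<phi> (d21_basis 1) else \<phi> (d21_basis i))"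
  have v: "v 1 = of_real (a*pr) *s u1" "v 2 = of_real pr *s u2" "v 3 = of_real (pr^2) *s E3"
    unfolding v_def using ph by (simp_all add: p_def)
  have hss: "h (s *s x) (t *s y) = s * cnj t * h x y" for s t x y
    using H(2) H(5) by simp
  have r1: "k * (a*pr) * (a*pr) * n1 = 1" using N pr ap
    by (simp add: k_def power2_eq_square field_simps)
  have r2: "k * pr * pr * n2 = 1" using N pr ap
    by (simp add: k_def power2_eq_square field_simps)
  have r3: "k * pr^2 * pr^2 * n3 = 1" using N pr ap
    by (simp add: k_def power2_eq_square field_simps)
  have diag: "complex_of_real k * (of_real s * cnj (of_real s) * of_real n) = of_real (k * s * s * n)"
    for s n by simp
  have orth: "\<forall>i j. complex_of_real k * h (v i) (v j) = (if i = j then 1 else 0)"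
    unfolding forall_3 v hss using r1 r2 r3
    by (simp only: diag o12 o13 o21 o23 o31 o32 N d3 if_True if_False) simp
  have span: "\<exists>cc :: 3 \<Rightarrow> complex. x = (\<Sum>i\<in>UNIV. cc i *s v i)" for x
  proof -
    define c1 where "c1 = x$1 / (of_real a * p)"
    define c2 where "c2 = (x$2 - x$1 * b1) / p"
    define c3 where "c3 = (x$3 - x$1 * (b1*al + c) - c2 * p * al) / p^2"
    have a0: "complex_of_real a \<noteq> 0" using ap by simp
    show ?thesis
      apply (rule exI[of _ "\<lambda>i. if i = 1 then c1 else if i = 2 then c2 else c3"])
      unfolding sum_3 v
      using p0 a0 by (simp add: vec3_eq cE cu d3 c1_def c2_def c3_def p_def[symmetric] field_simps)
  qed
  show ?thesis
    apply (rule exI[of _ k], rule exI[of _ a], rule exI[of _ \<phi>])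
    using kp ap aut orth span unfolding orthonormal_basis3_def v_def by blast
qed

end
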